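(* Let $X$ be a finite set, $r\ge 3$, and $\tau$ a non-empty subset of $\binom{X}{r}$. If $\tau$ is slim then $\tau$ is thin. Moreover, for $r=3$, $\tau$ is thin if and only if $\tau$ is slim.
   Context: $L(\tau)=\bigcup_{s\in\tau}s$. For $\tau\subseteq\binom{X}{r}$ non-empty, ${\rm exc}(\tau)=|L(\tau)|-|\tau|-(r-1)$ and $\tau$ is thin if ${\rm exc}(\tau')\ge0$ for all non-empty $\tau'\subseteq\tau$. For a non-empty collection $\tau$ of subsets of $X$ each of size at least 3, ${\rm exc}'(\tau)=|L(\tau)|-2-\sum_{s\in\tau}(|s|-2)$, and $\tau$ is slim if ${\rm exc}'(\tau')\ge0$ for all non-empty $\tau'\subseteq\tau$. *)

theory Defs
  imports Main
begin

definition L :: "'a set set \<Rightarrow> 'a set" where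
  "L \<tau> = \<Union>\<tau>"

definition exc :: "nat \<Rightarrow> 'a set set \<Rightarrow> int" where
  "exc r \<tau> = int (card (L \<tau>)) - int (card \<tau>) - (int r - 1)"

definition thin :: "nat \<Rightarrow> 'a set set \<Rightarrow> bool" where
  "thin r \<tau> \<longleftrightarrow> (\<forall>\<tau>'. \<tau>' \<subseteq> \<tau> \<and> \<tau>' \<noteq> {} \<longrightarrow> exc r \<tau>' \<ge> 0)"

definition exc' :: "'a set set \<Rightarrow> int" where
  "exc' \<tau> = int (card (L \<tau>)) - 2 - (\<Sum>s\<in>\<tau>. int (card s) - 2)"

definition slim :: "'a set set \<Rightarrow> bool" where
  "slim \<tau> \<longleftrightarrow> (\<forall>\<tau>'. \<tau>' \<subseteq> \<tau> \<and> \<tau>' \<noteq> {} \<longrightarrow> exc' \<tau>' \<ge> 0)"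

end

theory Submission
  imports Defs
begin

lemma key:
  fixes X :: "'a set" and \<tau> :: "'a set set" and r :: nat
  assumes "finite X" and "r \<ge> 3"
    and "\<tau> \<subseteq> {s. s \<subseteq> X \<and> card s = r}" and "\<tau>' \<subseteq> \<tau>" and "\<tau>' \<noteq> {}"
  shows "exc r \<tau>' = exc' \<tau>' + (int (card \<tau>') - 1) * (int r - 3)"
proof -
  have "\<tau> \<subseteq> Pow X" using assms(3) by auto
  hence fin: "finite \<tau>'" using assms(1,4) by (meson finite_Pow_iff finite_subset)
  have "(\<Sum>s\<in>\<tau>'. int (card s) - 2) = (\<Sum>s\<in>\<tau>'. int r - 2)"
    using assms(3,4) by (intro sum.cong) auto
  also have "\<dots> = int (card \<tau>') * (int r - 2)" by simp
  finally show ?thesis unfolding exc_def exc'_def by (simp add: algebra_simps)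
qed

theorem lemma4:
  fixes X :: "'a set" and \<tau> :: "'a set set" and r :: nat
  assumes "finite X" and "r \<ge> 3"
    and "\<tau> \<subseteq> {s. s \<subseteq> X \<and> card s = r}" and "\<tau> \<noteq> {}"
  shows "(slim \<tau> \<longrightarrow> thin r \<tau>) \<and> (r = 3 \<longrightarrow> (thin r \<tau> \<longleftrightarrow> slim \<tau>))"
proof -
  have fin: "finite \<tau>'" if "\<tau>' \<subseteq> \<tau>" for \<tau>'
  proof -
    have "\<tau> \<subseteq> Pow X" using assms(3) by auto
    thus ?thesis using assms(1) that by (meson finite_Pow_iff finite_subset)
  qed
  have ge: "exc r \<tau>' \<ge> exc' \<tau>'" if "\<tau>' \<subseteq> \<tau>" "\<tau>' \<noteq> {}" for \<tau>'
  proof -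
    have "card \<tau>' \<ge> 1" using fin[OF that(1)] that(2) by (simp add: Suc_le_eq card_gt_0_iff)
    hence "(int (card \<tau>') - 1) * (int r - 3) \<ge> 0" using assms(2) by simp
    thus ?thesis using key[OF assms(1,2,3) that] by simp
  qed
  have eq: "r = 3 \<Longrightarrow> exc r \<tau>' = exc' \<tau>'" if "\<tau>' \<subseteq> \<tau>" "\<tau>' \<noteq> {}" for \<tau>'
    using key[OF assms(1,2,3) that] by simp
  show ?thesis unfolding thin_def slim_def using ge eq by (smt (verit))
qed

end
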